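(* Let $L=\mathbb{Z}\times\mathbb{Z}$ with the product $$(p,q)\cdot(p',q')=\Bigl(p+p',\ q+q'+\binom{p}{2}\binom{p'}{2}\Bigr).$$ Then $L$ is a commutative loop which is torsion-free nilpotent of class $4$, with $$D_2L=D_3L=D_4L=\{(0,q)\mid q\in\mathbb{Z}\},$$ while $\mathrm{LMlt}(L)$ is nilpotent of class $3$.
   Context: Here $\binom{p}{2}=p(p-1)/2$ for $p\in\mathbb{Z}$. A loop is a set with a product and two-sided identity in which all left multiplications $x\mapsto ax$ and right multiplications $x\mapsto xa$ are bijective. $\mathrm{LMlt}(L)$ is the group of permutations of $L$ generated by the left multiplications $L_a\colon x\mapsto ax$. The loop algebra $\mathbb{Q}L$ has basis $L$ with bilinearly extended product; $I$ is the kernel of the linear map $\mathbb{Q}L\to\mathbb{Q}$ sending each element of $L$ to $1$; $I^k$ is the ideal spanned by all products (any bracketing) of at least $k$ elements of $I$; $D_kL=\{g\in L\mid g-1\in I^k\}$. $L$ is torsion-free nilpotent of class $n$ if $D_{n+1}L$ is trivial and $D_nL$ is not. A group $G$ is nilpotent of class $c$ if $\gamma_{c+1}G=1\neq\gamma_cG$, where $\gamma_1G=G$, $\gamma_{k+1}G=[G,\gamma_kG]$. *)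

theory Defs
  imports Main "HOL-Algebra.Algebra"
begin

definition is_loop :: "('a \<Rightarrow> 'a \<Rightarrow> 'a) \<Rightarrow> 'a \<Rightarrow> bool" where
  "is_loop mul e \<longleftrightarrow> (\<forall>x. mul e x = x \<and> mul x e = x)
     \<and> (\<forall>a. bij (\<lambda>x. mul a x) \<and> bij (\<lambda>x. mul x a))"

definition supp :: "('a \<Rightarrow> rat) \<Rightarrow> 'a set" where
  "supp u = {x. u x \<noteq> 0}"

definition QL :: "('a \<Rightarrow> rat) set" where
  "QL = {u. finite (supp u)}"

definition conv :: "('a \<Rightarrow> 'a \<Rightarrow> 'a) \<Rightarrow> ('a \<Rightarrow> rat) \<Rightarrow> ('a \<Rightarrow> rat) \<Rightarrow> ('a \<Rightarrow> rat)" where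
  "conv mul u v = (\<lambda>z. \<Sum>x\<in>supp u. \<Sum>y\<in>supp v. if mul x y = z then u x * v y else 0)"

definition aug :: "('a \<Rightarrow> rat) \<Rightarrow> rat" where
  "aug u = (\<Sum>x\<in>supp u. u x)"

definition aug_ideal :: "('a \<Rightarrow> rat) set" where
  "aug_ideal = {u \<in> QL. aug u = 0}"

inductive prodI :: "('a \<Rightarrow> 'a \<Rightarrow> 'a) \<Rightarrow> nat \<Rightarrow> ('a \<Rightarrow> rat) \<Rightarrow> bool"
  for mul where
  base: "u \<in> aug_ideal \<Longrightarrow> prodI mul 1 u"
| prod: "prodI mul m u \<Longrightarrow> prodI mul n v \<Longrightarrow> prodI mul (m + n) (conv mul u v)"

text \<open>I^k: the ideal of QL spanned by all products of at least k elements of I.\<close>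
inductive powI :: "('a \<Rightarrow> 'a \<Rightarrow> 'a) \<Rightarrow> nat \<Rightarrow> ('a \<Rightarrow> rat) \<Rightarrow> bool"
  for mul k where
  gen: "prodI mul m u \<Longrightarrow> k \<le> m \<Longrightarrow> powI mul k u"
| zero: "powI mul k (\<lambda>z. 0)"
| add: "powI mul k u \<Longrightarrow> powI mul k v \<Longrightarrow> powI mul k (\<lambda>z. u z + v z)"
| smult: "powI mul k u \<Longrightarrow> powI mul k (\<lambda>z. c * u z)"
| lmult: "a \<in> QL \<Longrightarrow> powI mul k u \<Longrightarrow> powI mul k (conv mul a u)"
| rmult: "a \<in> QL \<Longrightarrow> powI mul k u \<Longrightarrow> powI mul k (conv mul u a)"

definition basis_elt :: "'a \<Rightarrow> ('a \<Rightarrow> rat)" where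
  "basis_elt g = (\<lambda>z. if z = g then 1 else 0)"

definition Dk :: "('a \<Rightarrow> 'a \<Rightarrow> 'a) \<Rightarrow> 'a \<Rightarrow> nat \<Rightarrow> 'a set" where
  "Dk mul e k = {g. powI mul k (\<lambda>z. basis_elt g z - basis_elt e z)}"

definition tf_nilpotent_class :: "('a \<Rightarrow> 'a \<Rightarrow> 'a) \<Rightarrow> 'a \<Rightarrow> nat \<Rightarrow> bool" where
  "tf_nilpotent_class mul e n \<longleftrightarrow> Dk mul e (Suc n) = {e} \<and> Dk mul e n \<noteq> {e}"

definition LMlt :: "('a \<Rightarrow> 'a \<Rightarrow> 'a) \<Rightarrow> ('a \<Rightarrow> 'a) monoid" where
  "LMlt mul = (BijGroup UNIV)\<lparr>carrier :=
      generate (BijGroup UNIV) ((\<lambda>a. (\<lambda>x. mul a x)) ` UNIV)\<rparr>"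

text \<open>Lower central series: gamma G 1 = G, gamma G (k+1) = [G, gamma G k]
  (gamma G 0 is also set to G, it plays no role).\<close>
fun gamma :: "('g, 'b) monoid_scheme \<Rightarrow> nat \<Rightarrow> 'g set" where
  "gamma G 0 = carrier G"
| "gamma G (Suc 0) = carrier G"
| "gamma G (Suc (Suc k)) = generate G
     {inv\<^bsub>G\<^esub> x \<otimes>\<^bsub>G\<^esub> inv\<^bsub>G\<^esub> y \<otimes>\<^bsub>G\<^esub> x \<otimes>\<^bsub>G\<^esub> y | x y. x \<in> carrier G \<and> y \<in> gamma G (Suc k)}"

definition group_nilpotent_class :: "('g, 'b) monoid_scheme \<Rightarrow> nat \<Rightarrow> bool" where
  "group_nilpotent_class G c \<longleftrightarrow> gamma G (Suc c) = {\<one>\<^bsub>G\<^esub>} \<and> gamma G c \<noteq> {\<one>\<^bsub>G\<^esub>}"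

definition binom2 :: "int \<Rightarrow> int" where
  "binom2 p = p * (p - 1) div 2"

definition mulL :: "int \<times> int \<Rightarrow> int \<times> int \<Rightarrow> int \<times> int" where
  "mulL a b = (fst a + fst b, snd a + snd b + binom2 (fst a) * binom2 (fst b))"

end

theory Submission
  imports Defs
begin


lemma binom2_2: "2 * binom2 p = p * (p - 1)"
  unfolding binom2_def by simp

lemma binom2_add: "binom2 (a + b) = binom2 a + binom2 b + a * b"
proof -
  have "2 * binom2 (a+b) = (a+b)*(a+b-1)" by (rule binom2_2)
  also have "\<dots> = a*(a-1) + b*(b-1) + 2*a*b" by (simp add: algebra_simps)
  also have "\<dots> = 2 * (binom2 a + binom2 b + a * b)" using binom2_2[of a] binom2_2[of b] by simp
  finally show ?thesis by simp
qed

lemma binom2_0[simp]: "binom2 0 = 0" by (simp add: binom2_def)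

definition lam :: "('a \<Rightarrow> rat) \<Rightarrow> ('a \<Rightarrow> rat) \<Rightarrow> rat" where
  "lam F w = (\<Sum>z\<in>supp w. w z * F z)"

lemma lam_superset: "finite A \<Longrightarrow> supp w \<subseteq> A \<Longrightarrow> lam F w = (\<Sum>z\<in>A. w z * F z)"
  unfolding lam_def by (rule sum.mono_neutral_left) (auto simp: supp_def)

lemma supp_conv:
  assumes "finite (supp u)" "finite (supp v)"
  shows "supp (conv mul u v) \<subseteq> (\<lambda>(x,y). mul x y) ` (supp u \<times> supp v)"
proof
  fix z assume z: "z \<in> supp (conv mul u v)"
  show "z \<in> (\<lambda>(x,y). mul x y) ` (supp u \<times> supp v)"
  proof (rule ccontr)
    assume nz: "z \<notin> (\<lambda>(x,y). mul x y) ` (supp u \<times> supp v)"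
    have "conv mul u v z = 0" unfolding conv_def
      by (rule sum.neutral, rule ballI, rule sum.neutral) (use nz in force)
    with z show False by (simp add: supp_def)
  qed
qed

lemma finite_supp_conv:
  assumes "finite (supp u)" "finite (supp v)"
  shows "finite (supp (conv mul u v))"
  using supp_conv[OF assms] assms by (meson finite_SigmaI finite_imageI finite_subset)

lemma lam_conv:
  assumes u: "finite (supp u)" and v: "finite (supp v)"
  shows "lam F (conv mul u v) = (\<Sum>x\<in>supp u. \<Sum>y\<in>supp v. u x * v y * F (mul x y))"
proof -
  let ?S = "(\<lambda>(x,y). mul x y) ` (supp u \<times> supp v)"
  have fS: "finite ?S" using u v by simp
  have "lam F (conv mul u v) = (\<Sum>z\<in>?S. conv mul u v z * F z)"
    by (rule lam_superset[OF fS supp_conv[OF u v]])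
  also have "\<dots> = (\<Sum>z\<in>?S. \<Sum>x\<in>supp u. \<Sum>y\<in>supp v. (if mul x y = z then u x * v y * F z else 0))"
    unfolding conv_def sum_distrib_right by (intro sum.cong refl) auto
  also have "\<dots> = (\<Sum>x\<in>supp u. \<Sum>y\<in>supp v. \<Sum>z\<in>?S. (if mul x y = z then u x * v y * F z else 0))"
    by (subst sum.swap) (simp add: sum.swap[of _ ?S])
  also have "\<dots> = (\<Sum>x\<in>supp u. \<Sum>y\<in>supp v. u x * v y * F (mul x y))"
    using fS by (intro sum.cong refl) (auto simp: sum.delta')
  finally show ?thesis .
qed

lemma lam_conv3:
  assumes u: "finite (supp u)" and v: "finite (supp v)"
    and F: "\<And>x y. F (mul x y) = G1 x * H1 y + G2 x * H2 y + G3 x * H3 y"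
  shows "lam F (conv mul u v) = lam G1 u * lam H1 v + lam G2 u * lam H2 v + lam G3 u * lam H3 v"
proof -
  have "lam F (conv mul u v) = (\<Sum>x\<in>supp u. \<Sum>y\<in>supp v. u x * v y * F (mul x y))"
    by (rule lam_conv[OF u v])
  also have "\<dots> = (\<Sum>x\<in>supp u. \<Sum>y\<in>supp v. u x * v y * (G1 x * H1 y + G2 x * H2 y + G3 x * H3 y))"
    by (simp only: F)
  also have "\<dots> = lam G1 u * lam H1 v + lam G2 u * lam H2 v + lam G3 u * lam H3 v"
    unfolding lam_def sum_product by (simp add: sum.distrib[symmetric] algebra_simps)
  finally show ?thesis .
qed

lemma lam_add: "finite (supp u) \<Longrightarrow> finite (supp v) \<Longrightarrow> lam F (\<lambda>z. u z + v z) = lam F u + lam F v"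
proof -
  assume a: "finite (supp u)" "finite (supp v)"
  have f: "finite (supp u \<union> supp v)" using a by simp
  have s: "supp (\<lambda>z. u z + v z) \<subseteq> supp u \<union> supp v" by (auto simp: supp_def)
  show ?thesis
    unfolding lam_superset[OF f s] lam_superset[OF f, of u] lam_superset[OF f, of v]
      using lam_superset[OF f, of u] lam_superset[OF f, of v]
    by (auto simp: sum.distrib algebra_simps)
qed

lemma lam_smult: "finite (supp u) \<Longrightarrow> lam F (\<lambda>z. c * u z) = c * lam F u"
proof -
  assume a: "finite (supp u)"
  have s: "supp (\<lambda>z. c * u z) \<subseteq> supp u" by (auto simp: supp_def)
  show ?thesis unfolding lam_superset[OF a s] lam_def by (simp add: sum_distrib_left algebra_simps)
qed

lemma lam_zeroF[simp]: "lam (\<lambda>_. 0) w = 0" by (simp add: lam_def)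

definition F1 :: "int \<times> int \<Rightarrow> rat" where "F1 z = 1"
definition Fp :: "int \<times> int \<Rightarrow> rat" where "Fp z = of_int (fst z)"
definition FC :: "int \<times> int \<Rightarrow> rat" where "FC z = of_int (binom2 (fst z))"
definition Fq :: "int \<times> int \<Rightarrow> rat" where "Fq z = of_int (snd z)"

definition F0 :: "int \<times> int \<Rightarrow> rat" where "F0 z = 0"
lemma lam_F0[simp]: "lam F0 w = 0" by (simp add: lam_def F0_def)

lemma F1_mul: "F1 (mulL x y) = F1 x * F1 y + F0 x * F0 y + F0 x * F0 y"
  by (simp add: F1_def F0_def)
lemma Fp_mul: "Fp (mulL x y) = Fp x * F1 y + F1 x * Fp y + F0 x * F0 y"
  by (simp add: F1_def Fp_def mulL_def F0_def)
lemma FC_mul: "FC (mulL x y) = FC x * F1 y + F1 x * FC y + Fp x * Fp y"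
  by (simp add: F1_def Fp_def FC_def mulL_def binom2_add)
lemma Fq_mul: "Fq (mulL x y) = Fq x * F1 y + F1 x * Fq y + FC x * FC y"
  by (simp add: F1_def Fq_def FC_def mulL_def)

definition inv_ok :: "nat \<Rightarrow> (int \<times> int \<Rightarrow> rat) \<Rightarrow> bool" where
  "inv_ok k w \<longleftrightarrow> finite (supp w) \<and> (1 \<le> k \<longrightarrow> lam F1 w = 0) \<and> (2 \<le> k \<longrightarrow> lam Fp w = 0)
     \<and> (3 \<le> k \<longrightarrow> lam FC w = 0) \<and> (5 \<le> k \<longrightarrow> lam Fq w = 0)"

lemma aug_lam: "aug u = lam F1 u" by (simp add: aug_def lam_def F1_def)

lemma prodI_ok: "prodI mulL m u \<Longrightarrow> 1 \<le> m \<and> inv_ok m u"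
proof (induction rule: prodI.induct)
  case (base u)
  then show ?case by (auto simp: inv_ok_def aug_ideal_def QL_def aug_lam)
next
  case (prod m u n v)
  have fu: "finite (supp u)" and fv: "finite (supp v)" using prod by (auto simp: inv_ok_def)
  have u1: "lam F1 u = 0" and v1: "lam F1 v = 0" using prod by (auto simp: inv_ok_def)
  note l = lam_conv3[OF fu fv]
  have a: "lam F1 (conv mulL u v) = 0" using l[where F=F1, OF F1_mul] u1 by simp
  have b: "lam Fp (conv mulL u v) = 0" using l[where F=Fp, OF Fp_mul] u1 v1 by simp
  have c: "3 \<le> m + n \<Longrightarrow> lam FC (conv mulL u v) = 0"
  proof -
    assume "3 \<le> m + n" hence "2 \<le> m \<or> 2 \<le> n" by arith
    hence "lam Fp u = 0 \<or> lam Fp v = 0" using prod by (auto simp: inv_ok_def)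
    thus ?thesis using l[where F=FC, OF FC_mul] u1 v1 by auto
  qed
  have d: "5 \<le> m + n \<Longrightarrow> lam Fq (conv mulL u v) = 0"
  proof -
    assume "5 \<le> m + n" hence "3 \<le> m \<or> 3 \<le> n" by arith
    hence "lam FC u = 0 \<or> lam FC v = 0" using prod by (auto simp: inv_ok_def)
    thus ?thesis using l[where F=Fq, OF Fq_mul] u1 v1 by auto
  qed
  show ?case using prod a b c d finite_supp_conv[OF fu fv] by (auto simp: inv_ok_def)
qed

lemma powI_ok: "powI mulL k w \<Longrightarrow> inv_ok k w"
proof (induction rule: powI.induct)
  case (gen m u)
  then show ?case using prodI_ok[OF gen(1)] by (auto simp: inv_ok_def)
next
  case zero
  then show ?case by (simp add: inv_ok_def lam_def supp_def)
next
  case (add u v)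
  have s: "supp (\<lambda>z. u z + v z) \<subseteq> supp u \<union> supp v" by (auto simp: supp_def)
  show ?case using add lam_add[of u v] s finite_subset by (auto simp: inv_ok_def)
next
  case (smult u c)
  have s: "supp (\<lambda>z. c * u z) \<subseteq> supp u" by (auto simp: supp_def)
  show ?case using smult lam_smult[of u] s finite_subset by (auto simp: inv_ok_def)
next
  case (lmult a u)
  have fa: "finite (supp a)" using lmult by (simp add: QL_def)
  have fu: "finite (supp u)" using lmult by (simp add: inv_ok_def)
  note l = lam_conv3[OF fa fu]
  show ?case using lmult l[where F=F1, OF F1_mul] l[where F=Fp, OF Fp_mul] l[where F=FC, OF FC_mul] l[where F=Fq, OF Fq_mul] finite_supp_conv[OF fa fu]
    by (auto simp: inv_ok_def)
next
  case (rmult a u)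
  have fa: "finite (supp a)" using rmult by (simp add: QL_def)
  have fu: "finite (supp u)" using rmult by (simp add: inv_ok_def)
  note l = lam_conv3[OF fu fa]
  show ?case using rmult l[where F=F1, OF F1_mul] l[where F=Fp, OF Fp_mul] l[where F=FC, OF FC_mul] l[where F=Fq, OF Fq_mul] finite_supp_conv[OF fu fa]
    by (auto simp: inv_ok_def)
qed

lemma lam_basis: "lam F (\<lambda>z. basis_elt g z - basis_elt e z) = F g - F e"
proof (cases "g = e")
  case True then show ?thesis by (simp add: lam_def)
next
  case False
  have s: "supp (\<lambda>z. basis_elt g z - basis_elt e z) \<subseteq> {g, e}"
    by (auto simp: supp_def basis_elt_def)
  have "lam F (\<lambda>z. basis_elt g z - basis_elt e z) = (\<Sum>z\<in>{g,e}. (basis_elt g z - basis_elt e z) * F z)"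
    by (rule lam_superset) (use s in auto)
  then show ?thesis using False by (simp add: basis_elt_def)
qed

lemma powI_mono: "powI mul k u \<Longrightarrow> j \<le> k \<Longrightarrow> powI mul j u"
  by (induction rule: powI.induct) (auto intro: powI.intros)

lemma Dk_mono: "j \<le> k \<Longrightarrow> Dk mul e k \<subseteq> Dk mul e j"
  unfolding Dk_def using powI_mono by blast

lemma D2_sub: "Dk mulL (0,0) 2 \<subseteq> {(0, q) | q. True}"
proof
  fix g assume "g \<in> Dk mulL (0,0) 2"
  hence "inv_ok 2 (\<lambda>z. basis_elt g z - basis_elt (0,0) z)" unfolding Dk_def using powI_ok by blast
  hence "Fp g - Fp (0,0) = 0" using lam_basis by (metis inv_ok_def order_refl)
  hence "fst g = 0" by (simp add: Fp_def)
  thus "g \<in> {(0, q) | q. True}" by (cases g) auto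
qed

lemma D5_sub: "Dk mulL (0,0) 5 \<subseteq> {(0,0)}"
proof
  fix g assume "g \<in> Dk mulL (0,0) 5"
  hence "inv_ok 5 (\<lambda>z. basis_elt g z - basis_elt (0,0) z)" unfolding Dk_def using powI_ok by blast
  hence "lam Fp (\<lambda>z. basis_elt g z - basis_elt (0,0) z) = 0" "lam Fq (\<lambda>z. basis_elt g z - basis_elt (0,0) z) = 0"
    unfolding inv_ok_def by auto
  hence "Fp g - Fp (0,0) = 0" "Fq g - Fq (0,0) = 0" by (simp_all only: lam_basis)
  hence "fst g = 0" "snd g = 0" by (simp_all add: Fp_def Fq_def)
  thus "g \<in> {(0,0)}" by (cases g) auto
qed



definition fl :: "('a \<times> rat) list \<Rightarrow> 'a \<Rightarrow> rat" where
  "fl xs z = (\<Sum>(g,c)\<leftarrow>xs. if g = z then c else 0)"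

lemma fl_Nil[simp]: "fl [] z = 0" by (simp add: fl_def)
lemma fl_Cons[simp]: "fl ((g,c)#xs) z = (if g = z then c else 0) + fl xs z" by (simp add: fl_def)

lemma supp_fl: "supp (fl xs) \<subseteq> fst ` set xs"
  by (induction xs) (auto simp: supp_def split: if_splits)

lemma fl_out: "z \<notin> fst ` set xs \<Longrightarrow> fl xs z = 0"
  using supp_fl[of xs] by (auto simp: supp_def)

lemma sum_fl: "finite A \<Longrightarrow> fst ` set xs \<subseteq> A \<Longrightarrow> (\<Sum>x\<in>A. fl xs x * G x) = (\<Sum>(g,c)\<leftarrow>xs. c * G g)"
proof (induction xs)
  case Nil then show ?case by simp
next
  case (Cons p xs)
  obtain g c where p: "p = (g,c)" by force
  have "(\<Sum>x\<in>A. fl (p#xs) x * G x) = (\<Sum>x\<in>A. (if g = x then c * G x else 0)) + (\<Sum>x\<in>A. fl xs x * G x)"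
    unfolding sum.distrib[symmetric] by (intro sum.cong) (auto simp: p algebra_simps)
  also have "\<dots> = c * G g + (\<Sum>(g,c)\<leftarrow>xs. c * G g)"
    using Cons p by (simp add: sum.delta)
  finally show ?case by (simp add: p)
qed

lemma sum_fl': "(\<Sum>x\<in>fst ` set xs. fl xs x * G x) = (\<Sum>(g,c)\<leftarrow>xs. c * G g)"
  by (rule sum_fl) auto

lemma conv_fin:
  assumes A: "finite A" and B: "finite B" and sA: "supp u \<subseteq> A" and sB: "supp v \<subseteq> B"
  shows "conv mul u v z = (\<Sum>x\<in>A. \<Sum>y\<in>B. if mul x y = z then u x * v y else 0)"
proof -
  let ?h = "\<lambda>x y. if mul x y = z then u x * v y else 0"
  have h0: "?h x y = 0" if "x \<notin> supp u \<or> y \<notin> supp v" for x y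
    using that by (auto simp: supp_def)
  have 1: "(\<Sum>y\<in>supp v. ?h x y) = (\<Sum>y\<in>B. ?h x y)" for x
    by (rule sum.mono_neutral_left[OF B sB]) (use h0 in blast)
  have 2: "(\<Sum>x\<in>supp u. \<Sum>y\<in>B. ?h x y) = (\<Sum>x\<in>A. \<Sum>y\<in>B. ?h x y)"
    by (rule sum.mono_neutral_left[OF A sA]) (use h0 in auto)
  show ?thesis unfolding conv_def 1 2 ..
qed

lemma fl_append[simp]: "fl (xs @ ys) z = fl xs z + fl ys z" by (simp add: fl_def)

lemma fl_inner: "fl (map (\<lambda>(h,d). (mul g h, c*d)) ys) z = c * (\<Sum>(h,d)\<leftarrow>ys. d * (if mul g h = z then 1 else 0))"
  by (induction ys) (auto simp: algebra_simps)

lemma fl_concat: "fl (concat (map (\<lambda>(g,c). map (\<lambda>(h,d). (mul g h, c*d)) ys) xs)) z =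
   (\<Sum>(g,c)\<leftarrow>xs. c * (\<Sum>(h,d)\<leftarrow>ys. d * (if mul g h = z then 1 else 0)))"
  by (induction xs) (auto simp: fl_inner)

lemma conv_fl: "conv mul (fl xs) (fl ys) = fl (concat (map (\<lambda>(g,c). map (\<lambda>(h,d). (mul g h, c*d)) ys) xs))"
proof
  fix z
  let ?A = "fst ` set xs" and ?B = "fst ` set ys"
  have "conv mul (fl xs) (fl ys) z = (\<Sum>x\<in>?A. \<Sum>y\<in>?B. if mul x y = z then fl xs x * fl ys y else 0)"
    by (rule conv_fin[OF _ _ supp_fl supp_fl]) auto
  also have "\<dots> = (\<Sum>x\<in>?A. fl xs x * (\<Sum>y\<in>?B. fl ys y * (if mul x y = z then 1 else 0)))"
    by (auto simp: sum_distrib_left intro!: sum.cong)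
  also have "\<dots> = (\<Sum>x\<in>?A. fl xs x * (\<Sum>(h,d)\<leftarrow>ys. d * (if mul x h = z then 1 else 0)))"
    by (simp only: sum_fl')
  also have "\<dots> = (\<Sum>(g,c)\<leftarrow>xs. c * (\<Sum>(h,d)\<leftarrow>ys. d * (if mul g h = z then 1 else 0)))"
    by (simp only: sum_fl')
  also have "\<dots> = fl (concat (map (\<lambda>(g,c). map (\<lambda>(h,d). (mul g h, c*d)) ys) xs)) z"
    by (rule fl_concat[symmetric])
  finally show "conv mul (fl xs) (fl ys) z = fl (concat (map (\<lambda>(g,c). map (\<lambda>(h,d). (mul g h, c*d)) ys) xs)) z" .
qed


definition u1 :: "int \<times> int \<Rightarrow> rat" where "u1 = (\<lambda>z. basis_elt (1,0) z - basis_elt (0,0) z)"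

lemma u1_fl: "u1 = fl [((1,0),1),((0,0),-1)]"
  unfolding u1_def basis_elt_def by (rule ext) simp

lemma fl_eqI: "(\<And>z. z \<in> fst ` set xs \<union> fst ` set ys \<Longrightarrow> fl xs z = fl ys z) \<Longrightarrow> fl xs = fl ys"
  by (rule ext) (metis Un_iff fl_out)

lemma fl_eqI3: "list_all (\<lambda>z. fl xs z = fl ys z) (map fst xs @ map fst ys) \<Longrightarrow> fl xs = fl ys"
  by (rule fl_eqI) (auto simp: list_all_iff)

lemma fl_scale': "c * fl xs z = fl (map (\<lambda>(g,d). (g, c*d)) xs) z"
  by (induction xs) (auto simp: distrib_left)

lemma fl_add': "fl xs z + fl ys z = fl (xs @ ys) z"
  by (simp only: fl_append)

lemma basis_fl: "basis_elt g = fl [(g,1)]"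
  by (rule ext) (simp add: basis_elt_def)

lemma finite_fl: "finite (supp (fl xs))"
  by (rule finite_subset[OF supp_fl]) simp

lemma u1_aug: "u1 \<in> aug_ideal"
proof -
  have "aug u1 = 0" unfolding aug_lam u1_def lam_basis by (simp add: F1_def)
  then show ?thesis unfolding aug_ideal_def QL_def u1_fl using finite_fl by auto
qed

definition "U1 = [((1::int,0::int),1::rat),((0,0),-1)]"
definition "N2 = [((2::int,0::int),1::rat),((1,0),-2),((0,0),1)]"
definition "N3 = [((3::int,0::int),1::rat),((2,0),-3),((1,0),3),((0,0),-1)]"
definition "N4 = [((4::int,0::int),1::rat),((3,0),-4),((2,0),6),((1,0),-4),((0,0),1)]"
definition "G4 = [((4::int,1::int),1::rat),((3,0),-4),((2,0),6),((1,0),-4),((0,0),1)]"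

lemma cN2: "conv mulL (fl U1) (fl U1) = fl N2"
  unfolding conv_fl U1_def N2_def
  by (rule fl_eqI3) (simp add: mulL_def binom2_def)

lemma cN3: "conv mulL (fl N2) (fl U1) = fl N3"
  unfolding conv_fl U1_def N2_def N3_def
  by (rule fl_eqI3) (simp add: mulL_def binom2_def)

lemma cN4: "conv mulL (fl N3) (fl U1) = fl N4"
  unfolding conv_fl U1_def N4_def N3_def
  by (rule fl_eqI3) (simp add: mulL_def binom2_def)

lemma cG4: "conv mulL (fl N2) (fl N2) = fl G4"
  unfolding conv_fl G4_def N2_def
  by (rule fl_eqI3) (simp add: mulL_def binom2_def)

lemma cW: "fl (N4 @ map (\<lambda>(g,d). (g, -1*d)) G4) = fl [((4,0),1),((4,1),-1)]"
  by (rule fl_eqI3) (simp add: N4_def G4_def)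

lemma cV: "conv mulL (fl [((-4,-60),1)]) (fl [((4,0),1),((4,1),-1)]) = fl [((0,0),1),((0,1),-1)]"
  unfolding conv_fl
  by (rule fl_eqI3) (simp add: mulL_def binom2_def)

lemma key: "powI mulL 4 (\<lambda>z. basis_elt (0,1) z - basis_elt (0,0) z)"
proof -
  have u1: "u1 = fl U1" unfolding U1_def by (rule u1_fl)
  have P1: "prodI mulL 1 u1" by (rule prodI.base[OF u1_aug])
  have P2: "prodI mulL 2 (conv mulL u1 u1)" using prodI.prod[OF P1 P1] by (simp add: eval_nat_numeral)
  have P3: "prodI mulL 3 (conv mulL (conv mulL u1 u1) u1)" using prodI.prod[OF P2 P1] by (simp add: eval_nat_numeral)
  have P4: "prodI mulL 4 (conv mulL (conv mulL (conv mulL u1 u1) u1) u1)" using prodI.prod[OF P3 P1] by (simp add: eval_nat_numeral)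
  have Q4: "prodI mulL 4 (conv mulL (conv mulL u1 u1) (conv mulL u1 u1))" using prodI.prod[OF P2 P2] by (simp add: eval_nat_numeral)
  have P4': "prodI mulL 4 (fl N4)" using P4 unfolding u1 cN2 cN3 cN4 .
  have Q4': "prodI mulL 4 (fl G4)" using Q4 unfolding u1 cN2 cG4 .
  have W: "powI mulL 4 (\<lambda>z. fl N4 z + (-1) * fl G4 z)"
    by (rule powI.add[OF powI.gen[OF P4'] powI.smult[OF powI.gen[OF Q4']]]) auto
  hence W': "powI mulL 4 (fl [((4,0),1),((4,1),-1)])" unfolding fl_scale' fl_add' cW[symmetric] .
  have V: "powI mulL 4 (conv mulL (fl [((-4,-60),1)]) (fl [((4,0),1),((4,1),-1)]))"
    by (rule powI.lmult[OF _ W']) (simp add: QL_def finite_fl)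
  hence V': "powI mulL 4 (fl [((0,0),1),((0,1),-1)])" unfolding cV .
  have V2: "powI mulL 4 (\<lambda>z. (-1) * fl [((0,0),1),((0,1),-1)] z)"
    by (rule powI.smult[OF V'])
  have e: "(\<lambda>z. (-1) * fl [((0,0),1),((0,1),-1)] z) = (\<lambda>z. basis_elt (0,1) z - basis_elt (0,0) z)"
    by (rule ext) (simp add: basis_elt_def)
  show ?thesis using V2 unfolding e .
qed

lemma diff_fl: "(\<lambda>z. basis_elt a z - basis_elt b z) = fl [(a,1),(b,-1)]"
  by (rule ext) (simp add: basis_elt_def)

lemma step_conv: "conv mulL (basis_elt (0,q)) (\<lambda>z. basis_elt (0,1) z - basis_elt (0,0) z)
   = (\<lambda>z. basis_elt (0,q+1) z - basis_elt (0,q) z)"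
  unfolding basis_fl[of "(0,q)"] diff_fl conv_fl
  by (rule ext) (simp add: mulL_def basis_elt_def add.commute)

lemma basis_QL: "basis_elt g \<in> QL"
  by (simp add: QL_def basis_fl finite_fl)

lemma allq: "powI mulL 4 (\<lambda>z. basis_elt (0,q) z - basis_elt (0,0) z)"
proof (induction q rule: int_induct[where k=0])
  case base
  show ?case by (simp add: powI.zero)
next
  case (step1 i)
  have "powI mulL 4 (\<lambda>z. (basis_elt (0,i) z - basis_elt (0,0) z)
     + conv mulL (basis_elt (0,i)) (\<lambda>z. basis_elt (0,1) z - basis_elt (0,0) z) z)"
    by (rule powI.add[OF step1(2) powI.lmult[OF basis_QL key]])
  moreover have "(\<lambda>z. (basis_elt (0,i) z - basis_elt (0,0) z)
     + conv mulL (basis_elt (0,i)) (\<lambda>z. basis_elt (0,1) z - basis_elt (0,0) z) z)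
     = (\<lambda>z. basis_elt (0,i+1) z - basis_elt (0,0) z)"
    unfolding step_conv by (rule ext) (simp add: algebra_simps)
  ultimately show ?case by (simp only:)
next
  case (step2 i)
  have "powI mulL 4 (\<lambda>z. (basis_elt (0,i) z - basis_elt (0,0) z)
     + (-1) * conv mulL (basis_elt (0,i-1)) (\<lambda>z. basis_elt (0,1) z - basis_elt (0,0) z) z)"
    by (rule powI.add[OF step2(2) powI.smult[OF powI.lmult[OF basis_QL key]]])
  moreover have "(\<lambda>z. (basis_elt (0,i) z - basis_elt (0,0) z)
     + (-1) * conv mulL (basis_elt (0,i-1)) (\<lambda>z. basis_elt (0,1) z - basis_elt (0,0) z) z)
     = (\<lambda>z. basis_elt (0,i-1) z - basis_elt (0,0) z)"
    unfolding step_conv by (rule ext) (simp add: algebra_simps)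
  ultimately show ?case by (simp only:)
qed

lemma D4_sup: "{(0, q) | q. True} \<subseteq> Dk mulL (0,0) 4"
  unfolding Dk_def using allq by blast

lemma D_all: "Dk mulL (0,0) 2 = {(0, q) | q. True}" "Dk mulL (0,0) 3 = {(0, q) | q. True}"
   "Dk mulL (0,0) 4 = {(0, q) | q. True}"
proof -
  have a: "Dk mulL (0,0) 3 \<subseteq> Dk mulL (0,0) 2" "Dk mulL (0,0) 4 \<subseteq> Dk mulL (0,0) 3"
    by (rule Dk_mono, simp)+
  show "Dk mulL (0,0) 2 = {(0, q) | q. True}" "Dk mulL (0,0) 3 = {(0, q) | q. True}"
   "Dk mulL (0,0) 4 = {(0, q) | q. True}"
    using a D4_sup D2_sub by blast+
qed

lemma D5: "Dk mulL (0,0) 5 = {(0,0)}"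
proof
  show "Dk mulL (0,0) 5 \<subseteq> {(0,0)}" by (rule D5_sub)
  have "powI mulL 5 (\<lambda>z. basis_elt (0,0) z - basis_elt (0,0) z)" by (simp add: powI.zero)
  then show "{(0,0)} \<subseteq> Dk mulL (0,0) 5" by (simp add: Dk_def)
qed

lemma tf: "tf_nilpotent_class mulL (0, 0) 4"
proof -
  have "(0::int, 1::int) \<in> Dk mulL (0,0) 4" using D_all(3) by blast
  hence "Dk mulL (0,0) 4 \<noteq> {(0,0)}" by auto
  moreover have "Suc 4 = 5" by simp
  ultimately show ?thesis unfolding tf_nilpotent_class_def using D5 by simp
qed



definition Phi :: "int \<Rightarrow> int \<Rightarrow> int \<Rightarrow> int \<Rightarrow> int \<times> int \<Rightarrow> int \<times> int" where
  "Phi s a b c = (\<lambda>x. (fst x + s, snd x + a * binom2 (fst x) + b * fst x + c))"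

lemma Phi_comp: "Phi s a b c \<circ> Phi s2 a2 b2 c2 = Phi (s + s2) (a + a2) (b + b2 + a * s2) (c + c2 + a * binom2 s2 + b * s2)"
  by (rule ext) (simp add: Phi_def binom2_add algebra_simps)

lemma Phi_0: "Phi 0 0 0 0 = id"
  by (rule ext) (simp add: Phi_def)

lemma Phi_inj: "Phi s a b c = Phi s2 a2 b2 c2 \<Longrightarrow> s = s2 \<and> a = a2 \<and> b = b2 \<and> c = c2"
proof -
  assume h: "Phi s a b c = Phi s2 a2 b2 c2"
  from fun_cong[OF h, of "(0,0)"] have 1: "s = s2" "c = c2" by (simp_all add: Phi_def)
  from fun_cong[OF h, of "(1,0)"] have 2: "b + c = b2 + c2" by (simp add: Phi_def binom2_def)
  from fun_cong[OF h, of "(2,0)"] have 3: "a + 2*b + c = a2 + 2*b2 + c2" by (simp add: Phi_def binom2_def)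
  show ?thesis using 1 2 3 by simp
qed

lemma Phi_eq_id: "Phi s a b c = id \<Longrightarrow> s = 0 \<and> a = 0 \<and> b = 0 \<and> c = 0"
  using Phi_inj[of s a b c 0 0 0 0] Phi_0 by simp

definition Pinv :: "int \<Rightarrow> int \<Rightarrow> int \<Rightarrow> int \<Rightarrow> int \<times> int \<Rightarrow> int \<times> int" where
  "Pinv s a b c = Phi (-s) (-a) (a*s - b) (-c - a*binom2 (-s) + b*s)"

lemma binom2_neg: "binom2 s + binom2 (-s) = s * s"
  using binom2_add[of s "-s"] by simp

lemma Pinv_l: "Pinv s a b c \<circ> Phi s a b c = id"
proof -
  have "Pinv s a b c \<circ> Phi s a b c = Phi 0 0 0 0"
  proof -
    have e: "binom2 (-s) = s*s - binom2 s" using binom2_neg[of s] by simp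
    show ?thesis unfolding Pinv_def Phi_comp e by (simp add: algebra_simps)
  qed
  then show ?thesis by (simp add: Phi_0)
qed

lemma Pinv_r: "Phi s a b c \<circ> Pinv s a b c = id"
proof -
  have "Phi s a b c \<circ> Pinv s a b c = Phi 0 0 0 0"
    unfolding Pinv_def Phi_comp by (simp add: algebra_simps)
  then show ?thesis by (simp add: Phi_0)
qed

lemma Phi_bij: "Phi s a b c \<in> Bij UNIV"
  unfolding Bij_def extensional_def
  using o_bij[OF Pinv_l Pinv_r] by (simp add: bij_betw_def bij_def)

lemma Pinv_bij: "Pinv s a b c \<in> Bij UNIV"
  unfolding Pinv_def by (rule Phi_bij)

lemma Lm_Phi: "(\<lambda>x. mulL a x) = Phi (fst a) (binom2 (fst a)) 0 (snd a)"
  by (rule ext) (simp add: mulL_def Phi_def algebra_simps)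

abbreviation BG :: "(int \<times> int \<Rightarrow> int \<times> int) monoid" where "BG \<equiv> BijGroup UNIV"

lemma BG_mult: "f \<in> Bij UNIV \<Longrightarrow> g \<in> Bij UNIV \<Longrightarrow> f \<otimes>\<^bsub>BG\<^esub> g = f \<circ> g"
  by (simp add: BijGroup_def compose_def o_def restrict_UNIV)

lemma BG_one: "\<one>\<^bsub>BG\<^esub> = id"
  by (simp add: BijGroup_def restrict_UNIV id_def)

lemma BG_carrier: "carrier BG = Bij UNIV" by (simp add: BijGroup_def)

lemma range_sub: "range (\<lambda>a. (\<lambda>x. mulL a x)) \<subseteq> carrier BG"
  unfolding BG_carrier Lm_Phi using Phi_bij by auto

lemma G_simps: "carrier (LMlt mulL) = generate BG (range (\<lambda>a. (\<lambda>x. mulL a x)))"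
  "monoid.mult (LMlt mulL) = monoid.mult BG" "one (LMlt mulL) = one BG"
  by (simp_all add: LMlt_def)

lemma grpG: "group (LMlt mulL)"
  unfolding LMlt_def
  by (rule subgroup.subgroup_is_group[OF group.generate_is_subgroup[OF group_BijGroup range_sub] group_BijGroup])

lemma carrier_Phi: "f \<in> carrier (LMlt mulL) \<Longrightarrow> \<exists>s a b c. f = Phi s a b c"
  unfolding G_simps
proof (induction rule: generate.induct)
  case one
  then show ?case using BG_one Phi_0 by metis
next
  case (incl h)
  then show ?case using Lm_Phi by auto
next
  case (inv h)
  then obtain a where h: "h = Phi (fst a) (binom2 (fst a)) 0 (snd a)" using Lm_Phi by auto
  let ?p = "Pinv (fst a) (binom2 (fst a)) 0 (snd a)"
  have "inv\<^bsub>BG\<^esub> h = ?p"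
    by (rule group.inv_equality[OF group_BijGroup])
      (simp_all add: h BG_carrier Phi_bij Pinv_bij BG_mult Pinv_l BG_one)
  then show ?case unfolding Pinv_def by blast
next
  case (eng h1 h2)
  then obtain s a b c s2 a2 b2 c2 where "h1 = Phi s a b c" "h2 = Phi s2 a2 b2 c2" by blast
  then show ?case using BG_mult Phi_bij Phi_comp by metis
qed

lemma multG: "x \<in> carrier (LMlt mulL) \<Longrightarrow> y \<in> carrier (LMlt mulL) \<Longrightarrow> x \<otimes>\<^bsub>LMlt mulL\<^esub> y = x \<circ> y"
  using carrier_Phi Phi_bij BG_mult G_simps(2) by metis

lemma oneG: "\<one>\<^bsub>LMlt mulL\<^esub> = id" using G_simps(3) BG_one by simp

lemma (in group) comm_rel:
  assumes "x \<in> carrier G" "y \<in> carrier G"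
  shows "y \<otimes> x \<otimes> (inv x \<otimes> inv y \<otimes> x \<otimes> y) = x \<otimes> y"
proof -
  have h: "a \<otimes> (inv a \<otimes> z) = z" if "a \<in> carrier G" "z \<in> carrier G" for a z
    using that by (simp add: m_assoc[symmetric])
  show ?thesis using assms by (simp add: m_assoc h)
qed


abbreviation GG :: "(int \<times> int \<Rightarrow> int \<times> int) monoid" where "GG \<equiv> LMlt mulL"

definition T1 :: "(int \<times> int \<Rightarrow> int \<times> int) set" where
  "T1 = {f \<in> carrier GG. \<exists>b c. f = Phi 0 0 b c}"
definition T0 :: "(int \<times> int \<Rightarrow> int \<times> int) set" where
  "T0 = {f \<in> carrier GG. \<exists>c. f = Phi 0 0 0 c}"

lemma oneG_Phi: "\<one>\<^bsub>GG\<^esub> = Phi 0 0 0 0" using oneG Phi_0 by simp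

lemma gen_T1: "K \<subseteq> T1 \<Longrightarrow> generate GG K \<subseteq> T1"
proof
  assume K: "K \<subseteq> T1"
  fix f assume "f \<in> generate GG K"
  then show "f \<in> T1"
  proof (induction rule: generate.induct)
    case one
    show ?case using monoid.one_closed[OF group.is_monoid[OF grpG]] oneG_Phi by (auto simp: T1_def)
  next
    case (incl h) thus ?case using K by auto
  next
    case (inv h)
    then obtain b c where hc: "h \<in> carrier GG" and h: "h = Phi 0 0 b c" using K by (auto simp: T1_def)
    have ic: "inv\<^bsub>GG\<^esub> h \<in> carrier GG" using group.inv_closed[OF grpG hc] .
    then obtain s a b2 c2 where i: "inv\<^bsub>GG\<^esub> h = Phi s a b2 c2" using carrier_Phi by blast
    have "h \<otimes>\<^bsub>GG\<^esub> inv\<^bsub>GG\<^esub> h = \<one>\<^bsub>GG\<^esub>" using group.r_inv[OF grpG hc] .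
    hence "Phi 0 0 b c \<circ> Phi s a b2 c2 = id" using multG[OF hc ic] oneG h i by simp
    hence "Phi s a (b + b2) (c + c2 + b * s) = id" unfolding Phi_comp by simp
    hence "s = 0 \<and> a = 0" using Phi_eq_id by blast
    thus ?case using ic i by (auto simp: T1_def)
  next
    case (eng h1 h2)
    then obtain b c b2 c2 where h1: "h1 \<in> carrier GG" "h1 = Phi 0 0 b c"
      and h2: "h2 \<in> carrier GG" "h2 = Phi 0 0 b2 c2" by (auto simp: T1_def)
    have "h1 \<otimes>\<^bsub>GG\<^esub> h2 = Phi 0 0 (b + b2) (c + c2)"
      using multG[OF h1(1) h2(1)] h1(2) h2(2) Phi_comp by simp
    moreover have "h1 \<otimes>\<^bsub>GG\<^esub> h2 \<in> carrier GG" using monoid.m_closed[OF group.is_monoid[OF grpG] h1(1) h2(1)] .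
    ultimately show ?case by (auto simp: T1_def)
  qed
qed

lemma gen_T0: "K \<subseteq> T0 \<Longrightarrow> generate GG K \<subseteq> T0"
proof
  assume K: "K \<subseteq> T0"
  fix f assume "f \<in> generate GG K"
  then show "f \<in> T0"
  proof (induction rule: generate.induct)
    case one
    show ?case using monoid.one_closed[OF group.is_monoid[OF grpG]] oneG_Phi by (auto simp: T0_def)
  next
    case (incl h) thus ?case using K by auto
  next
    case (inv h)
    then obtain c where hc: "h \<in> carrier GG" and h: "h = Phi 0 0 0 c" using K by (auto simp: T0_def)
    have ic: "inv\<^bsub>GG\<^esub> h \<in> carrier GG" using group.inv_closed[OF grpG hc] .
    then obtain s a b2 c2 where i: "inv\<^bsub>GG\<^esub> h = Phi s a b2 c2" using carrier_Phi by blast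
    have "h \<otimes>\<^bsub>GG\<^esub> inv\<^bsub>GG\<^esub> h = \<one>\<^bsub>GG\<^esub>" using group.r_inv[OF grpG hc] .
    hence "Phi 0 0 0 c \<circ> Phi s a b2 c2 = id" using multG[OF hc ic] oneG h i by simp
    hence "Phi s a b2 (c + c2) = id" unfolding Phi_comp by simp
    hence "s = 0 \<and> a = 0 \<and> b2 = 0" using Phi_eq_id by blast
    thus ?case using ic i by (auto simp: T0_def)
  next
    case (eng h1 h2)
    then obtain c c2 where h1: "h1 \<in> carrier GG" "h1 = Phi 0 0 0 c"
      and h2: "h2 \<in> carrier GG" "h2 = Phi 0 0 0 c2" by (auto simp: T0_def)
    have "h1 \<otimes>\<^bsub>GG\<^esub> h2 = Phi 0 0 0 (c + c2)"
      using multG[OF h1(1) h2(1)] h1(2) h2(2) Phi_comp by simp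
    moreover have "h1 \<otimes>\<^bsub>GG\<^esub> h2 \<in> carrier GG" using monoid.m_closed[OF group.is_monoid[OF grpG] h1(1) h2(1)] .
    ultimately show ?case by (auto simp: T0_def)
  qed
qed

lemma comm_facts:
  assumes x: "x \<in> carrier GG" and y: "y \<in> carrier GG"
  shows "inv\<^bsub>GG\<^esub> x \<otimes>\<^bsub>GG\<^esub> inv\<^bsub>GG\<^esub> y \<otimes>\<^bsub>GG\<^esub> x \<otimes>\<^bsub>GG\<^esub> y \<in> carrier GG"
    and "(y \<circ> x) \<circ> (inv\<^bsub>GG\<^esub> x \<otimes>\<^bsub>GG\<^esub> inv\<^bsub>GG\<^esub> y \<otimes>\<^bsub>GG\<^esub> x \<otimes>\<^bsub>GG\<^esub> y) = x \<circ> y"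
proof -
  interpret g: group GG by (rule grpG)
  let ?c = "inv\<^bsub>GG\<^esub> x \<otimes>\<^bsub>GG\<^esub> inv\<^bsub>GG\<^esub> y \<otimes>\<^bsub>GG\<^esub> x \<otimes>\<^bsub>GG\<^esub> y"
  show c: "?c \<in> carrier GG" using x y by simp
  have "y \<otimes>\<^bsub>GG\<^esub> x \<otimes>\<^bsub>GG\<^esub> ?c = x \<otimes>\<^bsub>GG\<^esub> y" by (rule g.comm_rel[OF x y])
  moreover have "y \<otimes>\<^bsub>GG\<^esub> x \<in> carrier GG" using x y by simp
  ultimately show "(y \<circ> x) \<circ> ?c = x \<circ> y" using multG x y c by metis
qed

lemma comm_T1:
  assumes x: "x \<in> carrier GG" and y: "y \<in> carrier GG"
  shows "inv\<^bsub>GG\<^esub> x \<otimes>\<^bsub>GG\<^esub> inv\<^bsub>GG\<^esub> y \<otimes>\<^bsub>GG\<^esub> x \<otimes>\<^bsub>GG\<^esub> y \<in> T1"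
proof -
  note cf = comm_facts[OF x y]
  obtain s1 a1 b1 c1 where xp: "x = Phi s1 a1 b1 c1" using carrier_Phi[OF x] by blast
  obtain s2 a2 b2 c2 where yp: "y = Phi s2 a2 b2 c2" using carrier_Phi[OF y] by blast
  obtain s a b d where cp: "inv\<^bsub>GG\<^esub> x \<otimes>\<^bsub>GG\<^esub> inv\<^bsub>GG\<^esub> y \<otimes>\<^bsub>GG\<^esub> x \<otimes>\<^bsub>GG\<^esub> y = Phi s a b d"
    using carrier_Phi[OF cf(1)] by blast
  have "(Phi s2 a2 b2 c2 \<circ> Phi s1 a1 b1 c1) \<circ> Phi s a b d = Phi s1 a1 b1 c1 \<circ> Phi s2 a2 b2 c2"
    using cf(2) xp yp cp by simp
  hence "s = 0 \<and> a = 0" unfolding Phi_comp using Phi_inj by fastforce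
  thus ?thesis using cf(1) cp by (auto simp: T1_def)
qed

lemma comm_T0:
  assumes x: "x \<in> carrier GG" and y: "y \<in> T1"
  shows "inv\<^bsub>GG\<^esub> x \<otimes>\<^bsub>GG\<^esub> inv\<^bsub>GG\<^esub> y \<otimes>\<^bsub>GG\<^esub> x \<otimes>\<^bsub>GG\<^esub> y \<in> T0"
proof -
  have yc: "y \<in> carrier GG" using y by (simp add: T1_def)
  note cf = comm_facts[OF x yc]
  obtain s1 a1 b1 c1 where xp: "x = Phi s1 a1 b1 c1" using carrier_Phi[OF x] by blast
  obtain b2 c2 where yp: "y = Phi 0 0 b2 c2" using y by (auto simp: T1_def)
  obtain s a b d where cp: "inv\<^bsub>GG\<^esub> x \<otimes>\<^bsub>GG\<^esub> inv\<^bsub>GG\<^esub> y \<otimes>\<^bsub>GG\<^esub> x \<otimes>\<^bsub>GG\<^esub> y = Phi s a b d"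
    using carrier_Phi[OF cf(1)] by blast
  have "(Phi 0 0 b2 c2 \<circ> Phi s1 a1 b1 c1) \<circ> Phi s a b d = Phi s1 a1 b1 c1 \<circ> Phi 0 0 b2 c2"
    using cf(2) xp yp cp by simp
  hence "s = 0 \<and> a = 0 \<and> b = 0" unfolding Phi_comp using Phi_inj by fastforce
  thus ?thesis using cf(1) cp by (auto simp: T0_def)
qed

lemma comm_one:
  assumes x: "x \<in> carrier GG" and y: "y \<in> T0"
  shows "inv\<^bsub>GG\<^esub> x \<otimes>\<^bsub>GG\<^esub> inv\<^bsub>GG\<^esub> y \<otimes>\<^bsub>GG\<^esub> x \<otimes>\<^bsub>GG\<^esub> y = \<one>\<^bsub>GG\<^esub>"
proof -
  have yc: "y \<in> carrier GG" using y by (simp add: T0_def)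
  note cf = comm_facts[OF x yc]
  obtain s1 a1 b1 c1 where xp: "x = Phi s1 a1 b1 c1" using carrier_Phi[OF x] by blast
  obtain c2 where yp: "y = Phi 0 0 0 c2" using y by (auto simp: T0_def)
  obtain s a b d where cp: "inv\<^bsub>GG\<^esub> x \<otimes>\<^bsub>GG\<^esub> inv\<^bsub>GG\<^esub> y \<otimes>\<^bsub>GG\<^esub> x \<otimes>\<^bsub>GG\<^esub> y = Phi s a b d"
    using carrier_Phi[OF cf(1)] by blast
  have "(Phi 0 0 0 c2 \<circ> Phi s1 a1 b1 c1) \<circ> Phi s a b d = Phi s1 a1 b1 c1 \<circ> Phi 0 0 0 c2"
    using cf(2) xp yp cp by simp
  hence "s = 0 \<and> a = 0 \<and> b = 0 \<and> d = 0" unfolding Phi_comp using Phi_inj by fastforce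
  thus ?thesis using cp oneG_Phi by simp
qed

lemma gamma2: "gamma GG (Suc (Suc 0)) \<subseteq> T1"
  unfolding gamma.simps by (rule gen_T1) (auto intro: comm_T1)

lemma gamma3: "gamma GG (Suc (Suc (Suc 0))) \<subseteq> T0"
  unfolding gamma.simps(3)[of GG "Suc 0"] by (rule gen_T0) (use gamma2 comm_T0 in blast)

lemma gen_one: "K \<subseteq> {\<one>\<^bsub>GG\<^esub>} \<Longrightarrow> generate GG K \<subseteq> {\<one>\<^bsub>GG\<^esub>}"
proof
  assume K: "K \<subseteq> {\<one>\<^bsub>GG\<^esub>}"
  fix f assume "f \<in> generate GG K"
  then show "f \<in> {\<one>\<^bsub>GG\<^esub>}"
  proof (induction rule: generate.induct)
    case (inv h) thus ?case using K monoid.inv_one[OF group.is_monoid[OF grpG]] by auto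
  next
    case (eng h1 h2) thus ?case using monoid.l_one[OF group.is_monoid[OF grpG] monoid.one_closed[OF group.is_monoid[OF grpG]]] by auto
  qed (use K in auto)
qed

lemma gamma4: "gamma GG (Suc (Suc (Suc (Suc 0)))) = {\<one>\<^bsub>GG\<^esub>}"
proof
  show "gamma GG (Suc (Suc (Suc (Suc 0)))) \<subseteq> {\<one>\<^bsub>GG\<^esub>}"
    unfolding gamma.simps(3)[of GG "Suc (Suc 0)"] by (rule gen_one) (use gamma3 comm_one in blast)
  show "{\<one>\<^bsub>GG\<^esub>} \<subseteq> gamma GG (Suc (Suc (Suc (Suc 0))))"
    unfolding gamma.simps(3)[of GG "Suc (Suc 0)"] by (auto intro: generate.one)
qed

lemma gamma3_ne: "gamma GG (Suc (Suc (Suc 0))) \<noteq> {\<one>\<^bsub>GG\<^esub>}"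
proof
  assume H: "gamma GG (Suc (Suc (Suc 0))) = {\<one>\<^bsub>GG\<^esub>}"
  let ?x0 = "\<lambda>x. mulL (1,0) x" and ?x2 = "\<lambda>x. mulL (2,0) x"
  have x0c: "?x0 \<in> carrier GG" unfolding G_simps by (rule generate.incl) simp
  have x2c: "?x2 \<in> carrier GG" unfolding G_simps by (rule generate.incl) simp
  have x0: "?x0 = Phi 1 0 0 0" unfolding Lm_Phi by (simp add: binom2_def)
  have x2: "?x2 = Phi 2 1 0 0" unfolding Lm_Phi by (simp add: binom2_def)
  define y where "y = inv\<^bsub>GG\<^esub> ?x2 \<otimes>\<^bsub>GG\<^esub> inv\<^bsub>GG\<^esub> ?x0 \<otimes>\<^bsub>GG\<^esub> ?x2 \<otimes>\<^bsub>GG\<^esub> ?x0"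
  have yg: "y \<in> gamma GG (Suc (Suc 0))"
    unfolding gamma.simps y_def by (rule generate.incl) (use x0c x2c in blast)
  note cf = comm_facts[OF x2c x0c, folded y_def]
  obtain s a b d where yp: "y = Phi s a b d" using carrier_Phi[OF cf(1)] by blast
  have "(Phi 1 0 0 0 \<circ> Phi 2 1 0 0) \<circ> Phi s a b d = Phi 2 1 0 0 \<circ> Phi 1 0 0 0"
    using cf(2) x0 x2 yp by simp
  hence "s = 0 \<and> a = 0 \<and> b = 1 \<and> d = 0" unfolding Phi_comp using Phi_inj by (fastforce simp: binom2_def)
  hence y: "y = Phi 0 0 1 0" using yp by simp
  define z where "z = inv\<^bsub>GG\<^esub> ?x0 \<otimes>\<^bsub>GG\<^esub> inv\<^bsub>GG\<^esub> y \<otimes>\<^bsub>GG\<^esub> ?x0 \<otimes>\<^bsub>GG\<^esub> y"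
  have "z \<in> gamma GG (Suc (Suc (Suc 0)))"
    unfolding gamma.simps(3)[of GG "Suc 0"] z_def by (rule generate.incl) (use x0c yg in blast)
  hence "z = \<one>\<^bsub>GG\<^esub>" using H by blast
  hence zid: "z = id" using oneG by simp
  note cf2 = comm_facts[OF x0c cf(1), folded z_def]
  have "(Phi 0 0 1 0 \<circ> Phi 1 0 0 0) \<circ> id = Phi 1 0 0 0 \<circ> Phi 0 0 1 0"
    using cf2(2) x0 y zid by simp
  hence "Phi 0 0 1 0 \<circ> Phi 1 0 0 0 = Phi 1 0 0 0 \<circ> Phi 0 0 1 0" by simp
  thus False unfolding Phi_comp using Phi_inj by (fastforce simp: binom2_def)
qed

lemma nil3: "group_nilpotent_class (LMlt mulL) 3"
  unfolding group_nilpotent_class_def using gamma4 gamma3_ne by (simp add: eval_nat_numeral)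


lemma mulL_comm: "mulL a b = mulL b a"
  by (simp add: mulL_def algebra_simps)

lemma loop: "is_loop mulL (0, 0)"
proof -
  have b1: "bij (mulL a)" for a
    using Phi_bij[of "fst a" "binom2 (fst a)" 0 "snd a"] Lm_Phi[of a]
    by (simp add: Bij_def bij_betw_def bij_def)
  have e: "(\<lambda>x. mulL x a) = mulL a" for a by (rule ext) (simp add: mulL_comm)
  have i1: "mulL (0,0) x = x" "mulL x (0,0) = x" for x by (simp_all add: mulL_def)
  show ?thesis unfolding is_loop_def e using b1 i1 by simp
qed

theorem proposition3p3:
  shows "is_loop mulL (0, 0)
    \<and> (\<forall>a b. mulL a b = mulL b a)
    \<and> tf_nilpotent_class mulL (0, 0) 4
    \<and> Dk mulL (0, 0) 2 = {(0, q) | q. True}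
    \<and> Dk mulL (0, 0) 3 = {(0, q) | q. True}
    \<and> Dk mulL (0, 0) 4 = {(0, q) | q. True}
    \<and> group_nilpotent_class (LMlt mulL) 3"
  using loop mulL_comm tf D_all nil3 by blast

end
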